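(* Let $(a_m)_{m\ge0}$ and $(b_n)_{n\ge0}$ be real sequences and let $f(x)=e^{-x/2}\sum_{m=0}^\infty a_mL_m(x)$, $g(x)=e^{-x/2}\sum_{n=0}^\infty b_nL_n(x)$ for $x\in[0,\infty)$, and $h(x)=\int_0^x f(x-t)g(t)\,\mathrm{d}t$. Computing the convolution termwise, $h(x)=e^{-x/2}\sum_{k=0}^\infty c_kL_k(x)$ with $\underline c=R^L\underline b$, where $R^L$ is the infinite matrix with entries $$R^L_{k,n}=a_{k-n}-a_{k-n-1}\qquad(k,n\ge0),\quad a_j:=0\text{ for }j<0,$$ i.e. $R^L$ is the lower triangular Toeplitz matrix with first column $(a_0,a_1,a_2,\dots)^T$ minus the same matrix shifted down by one row (first column $(0,a_0,a_1,\dots)^T$).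
   Context: $L_n$ denotes the Laguerre polynomial of degree $n$, $L_n(x)=\sum_{j=0}^n\binom{n}{j}\frac{(-x)^j}{j!}$; $e^{-x/2}L_n(x)$ are the weighted Laguerre functions. $\underline b=(b_0,b_1,\dots)^T$, $\underline c=(c_0,c_1,\dots)^T$. *)

theory Defs
  imports "HOL-Analysis.Analysis"
begin

definition laguerre :: "nat \<Rightarrow> real \<Rightarrow> real" where
  "laguerre n x = (\<Sum>j = 0..n. real (n choose j) * (- x) ^ j / fact j)"

definition coeff_ext :: "(nat \<Rightarrow> real) \<Rightarrow> int \<Rightarrow> real" where
  "coeff_ext a j = (if j < 0 then 0 else a (nat j))"

definition RL :: "(nat \<Rightarrow> real) \<Rightarrow> nat \<Rightarrow> nat \<Rightarrow> real" where
  "RL a k n = coeff_ext a (int k - int n) - coeff_ext a (int k - int n - 1)"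

end

theory Submission
  imports Defs "HOL-Complex_Analysis.Complex_Analysis"
begin



lemma pascal_sum:
  fixes u :: "nat \<Rightarrow> real"
  shows "(\<Sum>k\<le>Suc N. real (Suc N choose k) * u k) =
         (\<Sum>k\<le>N. real (N choose k) * u k) + (\<Sum>k\<le>N. real (N choose k) * u (Suc k))"
proof -
  have A: "(\<Sum>k\<le>Suc N. real (Suc N choose k) * u k) = u 0 + (\<Sum>k\<le>N. real (Suc N choose Suc k) * u (Suc k))"
    by (subst sum.atMost_Suc_shift) simp
  have B: "(\<Sum>k\<le>N. real (Suc N choose Suc k) * u (Suc k)) = (\<Sum>k\<le>N. real (N choose k) * u (Suc k)) + (\<Sum>k\<le>N. real (N choose Suc k) * u (Suc k))"
    by (simp add: sum.distrib algebra_simps)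
  have C: "u 0 + (\<Sum>k\<le>N. real (N choose Suc k) * u (Suc k)) = (\<Sum>k\<le>Suc N. real (N choose k) * u k)"
    by (subst sum.atMost_Suc_shift) simp
  have D: "(\<Sum>k\<le>Suc N. real (N choose k) * u k) = (\<Sum>k\<le>N. real (N choose k) * u k)"
    by simp
  show ?thesis using A B C D by linarith
qed

lemma vander_sum:
  fixes g :: "nat \<Rightarrow> real"
  shows "(\<Sum>i\<le>m. \<Sum>j\<le>n. real (m choose i) * real (n choose j) * g (i + j)) =
         (\<Sum>k\<le>m + n. real ((m + n) choose k) * g k)"
proof (induction m arbitrary: g)
  case 0
  then show ?case by simp
next
  case (Suc m)
  have "(\<Sum>i\<le>Suc m. \<Sum>j\<le>n. real (Suc m choose i) * real (n choose j) * g (i + j))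
      = (\<Sum>j\<le>n. real (n choose j) * (\<Sum>i\<le>Suc m. real (Suc m choose i) * g (i + j)))"
    by (subst sum.swap) (simp add: sum_distrib_left algebra_simps)
  also have "\<dots> = (\<Sum>j\<le>n. real (n choose j) * (\<Sum>i\<le>m. real (m choose i) * (g (i + j) + g (Suc i + j))))"
    apply (rule sum.cong[OF refl])
    subgoal for j using pascal_sum[of m "\<lambda>i. g (i + j)"] by (simp add: sum.distrib distrib_left)
    done
  also have "\<dots> = (\<Sum>i\<le>m. \<Sum>j\<le>n. real (m choose i) * real (n choose j) * (\<lambda>k. g k + g (Suc k)) (i + j))"
    by (subst sum.swap) (simp add: sum_distrib_left algebra_simps)
  also have "\<dots> = (\<Sum>k\<le>m + n. real ((m + n) choose k) * (g k + g (Suc k)))"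
    by (rule Suc.IH)
  also have "\<dots> = (\<Sum>k\<le>Suc m + n. real ((Suc m + n) choose k) * g k)"
    using pascal_sum[of "m + n" g] by (simp add: sum.distrib distrib_left)
  finally show ?case .
qed

lemma D1: "((\<lambda>t::real. t ^ Suc j / fact (Suc j)) has_real_derivative t ^ j / fact j) (at t)"
proof -
  have "((\<lambda>t::real. t ^ Suc j / fact (Suc j)) has_real_derivative (real (Suc j) * t ^ j) / fact (Suc j)) (at t)"
    using DERIV_pow[of "Suc j" t] by (intro DERIV_cdivide) simp
  moreover have "(real (Suc j) * t ^ j) / fact (Suc j) = t ^ j / fact j"
    by (simp add: fact_Suc del: of_nat_Suc)
  ultimately show ?thesis by simp
qed

lemma D2: "((\<lambda>t::real. (x - t) ^ Suc i / fact (Suc i)) has_real_derivative - ((x - t) ^ i / fact i)) (at t)"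
proof -
  have "((\<lambda>t::real. x - t) has_real_derivative -1) (at t)"
    by (auto intro!: derivative_eq_intros)
  have "((\<lambda>t::real. (x - t) ^ Suc i) has_real_derivative real (Suc i) * (x - t) ^ i * -1) (at t)"
    by (rule DERIV_cong[OF DERIV_power[OF DERIV_diff[OF DERIV_const DERIV_ident]]]) simp
  then have "((\<lambda>t::real. (x - t) ^ Suc i / fact (Suc i)) has_real_derivative (real (Suc i) * (x - t) ^ i * -1) / fact (Suc i)) (at t)"
    by (intro DERIV_cdivide)
  moreover have "(real (Suc i) * (x - t) ^ i * -1) / fact (Suc i) = - ((x - t) ^ i / fact i)"
    by (simp add: fact_Suc del: of_nat_Suc)
  ultimately show ?thesis by simp
qed

lemma aux_ring: "- (a::real) * b + c * d + a * b = d * c"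
  by (simp add: algebra_simps)

lemma beta_int:
  fixes x :: real
  assumes "0 \<le> x"
  shows "((\<lambda>t. (x - t) ^ i / fact i * (t ^ j / fact j)) has_integral x ^ (i + j + 1) / fact (i + j + 1)) {0..x}"
  using assms
proof (induction i arbitrary: j)
  case 0
  have "((\<lambda>t. t ^ j / fact j) has_integral (x ^ Suc j / fact (Suc j) - 0 ^ Suc j / fact (Suc j))) {0..x}"
    apply (rule fundamental_theorem_of_calculus[OF \<open>0 \<le> x\<close>])
    apply (simp only: has_real_derivative_iff_has_vector_derivative[symmetric])
    apply (rule has_field_derivative_at_within)
    apply (rule D1)
    done
  then show ?case by simp
next
  case (Suc i)
  define G where "G t = (x - t) ^ Suc i / fact (Suc i) * (t ^ Suc j / fact (Suc j))" for t
  have F: "((\<lambda>t. - ((x - t) ^ i / fact i) * (t ^ Suc j / fact (Suc j)) + t ^ j / fact j * ((x - t) ^ Suc i / fact (Suc i)))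
         has_integral (G x - G 0)) {0..x}"
    unfolding G_def
    apply (rule fundamental_theorem_of_calculus[OF \<open>0 \<le> x\<close>])
    apply (simp only: has_real_derivative_iff_has_vector_derivative[symmetric])
    apply (rule has_field_derivative_at_within)
    apply (rule DERIV_mult[OF D2 D1])
    done
  moreover have "G x - G 0 = 0" by (simp add: G_def)
  ultimately have F0: "((\<lambda>t. - ((x - t) ^ i / fact i) * (t ^ Suc j / fact (Suc j)) + t ^ j / fact j * ((x - t) ^ Suc i / fact (Suc i)))
         has_integral 0) {0..x}" by simp
  have "((\<lambda>t. (- ((x - t) ^ i / fact i) * (t ^ Suc j / fact (Suc j)) + t ^ j / fact j * ((x - t) ^ Suc i / fact (Suc i))) + (x - t) ^ i / fact i * (t ^ Suc j / fact (Suc j))) has_integral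
      (0 + x ^ (i + Suc j + 1) / fact (i + Suc j + 1))) {0..x}"
    by (rule has_integral_add[OF F0 Suc.IH[of "Suc j", OF Suc.prems]])
  moreover have "(\<lambda>t. (- ((x - t) ^ i / fact i) * (t ^ Suc j / fact (Suc j)) + t ^ j / fact j * ((x - t) ^ Suc i / fact (Suc i))) + (x - t) ^ i / fact i * (t ^ Suc j / fact (Suc j)))
     = (\<lambda>t. (x - t) ^ Suc i / fact (Suc i) * (t ^ j / fact j))"
    by (rule ext) (rule aux_ring)
  ultimately show ?case by simp
qed

lemma laguerre_alt: "laguerre n x = (\<Sum>k\<le>n. real (n choose k) * ((- x) ^ k / fact k))"
  unfolding laguerre_def atLeast0AtMost by (simp add: mult.assoc)

lemma laguerre_diff:
  "laguerre N x - laguerre (Suc N) x = (\<Sum>k\<le>N. real (N choose k) * ((-1) ^ k * x ^ (k + 1) / fact (k + 1)))"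
proof -
  have "laguerre (Suc N) x = laguerre N x + (\<Sum>k\<le>N. real (N choose k) * ((- x) ^ Suc k / fact (Suc k)))"
    unfolding laguerre_alt by (rule pascal_sum)
  moreover have "(\<Sum>k\<le>N. real (N choose k) * ((- x) ^ Suc k / fact (Suc k))) =
      - (\<Sum>k\<le>N. real (N choose k) * ((-1) ^ k * x ^ (k + 1) / fact (k + 1)))"
    by (simp add: sum_negf[symmetric] power_minus[of x] ac_simps)
  ultimately show ?thesis by simp
qed

lemma aux2: "(A::real) * ((s * X) / F) * (B * ((s2 * Y) / G)) = A * B * (s * s2) * (X / F * (Y / G))"
  by (simp add: field_simps)

lemma pm: "((t::real) - x) ^ i = (-1) ^ i * (x - t) ^ i"
  by (metis minus_diff_eq power_minus)

lemma lag_conv: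
  fixes x :: real
  assumes "0 \<le> x"
  shows "((\<lambda>t. laguerre m (x - t) * laguerre n t) has_integral
          (laguerre (m + n) x - laguerre (Suc (m + n)) x)) {0..x}"
proof -
  define g where "g k = (-1) ^ k * x ^ (k + 1) / fact (k + 1)" for k :: nat
  have eq: "laguerre m (x - t) * laguerre n t =
     (\<Sum>i\<le>m. \<Sum>j\<le>n. (real (m choose i) * real (n choose j) * (-1) ^ (i + j)) *
        ((x - t) ^ i / fact i * (t ^ j / fact j)))" for t
    unfolding laguerre_alt sum_product
    by (intro sum.cong refl) (simp only: power_minus[of "x - t"] power_minus[of t] power_add aux2)
  have "((\<lambda>t. \<Sum>i\<le>m. \<Sum>j\<le>n. (real (m choose i) * real (n choose j) * (-1) ^ (i + j)) *
        ((x - t) ^ i / fact i * (t ^ j / fact j))) has_integral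
       (\<Sum>i\<le>m. \<Sum>j\<le>n. (real (m choose i) * real (n choose j) * (-1) ^ (i + j)) *
        (x ^ (i + j + 1) / fact (i + j + 1)))) {0..x}"
    by (intro has_integral_sum finite_atMost ballI has_integral_mult_right beta_int assms)
  moreover have "(\<Sum>i\<le>m. \<Sum>j\<le>n. (real (m choose i) * real (n choose j) * (-1) ^ (i + j)) *
        (x ^ (i + j + 1) / fact (i + j + 1))) = (\<Sum>i\<le>m. \<Sum>j\<le>n. real (m choose i) * real (n choose j) * g (i + j))"
    unfolding g_def by (intro sum.cong refl) simp
  moreover have "\<dots> = (\<Sum>k\<le>m + n. real ((m + n) choose k) * g k)"
    by (rule vander_sum)
  moreover have "\<dots> = laguerre (m + n) x - laguerre (Suc (m + n)) x"
    unfolding laguerre_diff g_def ..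
  ultimately show ?thesis unfolding eq by simp
qed



lemma deriv_pow_exp: "(deriv ^^ j) exp = (exp :: complex \<Rightarrow> complex)"
proof (induction j)
  case 0 then show ?case by simp
next
  case (Suc j)
  have "deriv exp = (exp :: complex \<Rightarrow> complex)"
    by (rule ext) (metis DERIV_exp DERIV_imp_deriv)
  then show ?case using Suc by simp
qed

lemma exp_coeff_int:
  assumes r: "r > 0"
  shows "((\<lambda>t. exp (circlepath 0 r t) / (circlepath 0 r t) ^ j) has_integral 1 / fact j) {0..1}"
proof -
  have "((\<lambda>u. exp u / (u - 0) ^ Suc j) has_contour_integral ((2 * pi * \<i>) / fact j * (deriv ^^ j) exp 0)) (circlepath 0 r)"
    by (rule Cauchy_has_contour_integral_higher_derivative_circlepath)
       (auto intro!: continuous_intros holomorphic_intros simp: r)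
  then have H: "((\<lambda>t. exp (circlepath 0 r t) / (circlepath 0 r t) ^ Suc j * vector_derivative (circlepath 0 r) (at t within {0..1}))
       has_integral ((2 * pi * \<i>) / fact j)) {0..1}"
    by (simp add: has_contour_integral_def deriv_pow_exp)
  have nz: "circlepath 0 r t \<noteq> 0" for t
    using r by (simp add: circlepath)
  have "((\<lambda>t. exp (circlepath 0 r t) / (circlepath 0 r t) ^ Suc j * vector_derivative (circlepath 0 r) (at t within {0..1}))
       has_integral ((2 * pi * \<i>) / fact j)) {0..1} \<longleftrightarrow>
     ((\<lambda>t. (2 * pi * \<i>) * (exp (circlepath 0 r t) / (circlepath 0 r t) ^ j)) has_integral ((2 * pi * \<i>) / fact j)) {0..1}"
  proof (rule has_integral_cong)
    fix t :: real assume "t \<in> {0..1}"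
    then have "vector_derivative (circlepath 0 r) (at t within {0..1}) = 2 * pi * \<i> * r * exp(2 * of_real pi * \<i> * t)"
      by (intro vector_derivative_circlepath01) auto
    also have "\<dots> = 2 * pi * \<i> * circlepath 0 r t"
      by (simp add: circlepath)
    finally have "vector_derivative (circlepath 0 r) (at t within {0..1}) = 2 * pi * \<i> * circlepath 0 r t" .
    then show "exp (circlepath 0 r t) / (circlepath 0 r t) ^ Suc j * vector_derivative (circlepath 0 r) (at t within {0..1})
       = (2 * pi * \<i>) * (exp (circlepath 0 r t) / (circlepath 0 r t) ^ j)"
      using nz[of t] by (simp add: field_simps)
  qed
  with H have "((\<lambda>t. (2 * pi * \<i>) * (exp (circlepath 0 r t) / (circlepath 0 r t) ^ j)) has_integral ((2 * pi * \<i>) / fact j)) {0..1}"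
    by simp
  from has_integral_mult_right[OF this, of "1 / (2 * pi * \<i>)"]
  show ?thesis by simp
qed

lemma lag_repr:
  assumes r: "r > 0"
  shows "((\<lambda>t. exp (circlepath 0 r t) * (1 - complex_of_real x / circlepath 0 r t) ^ n)
           has_integral complex_of_real (laguerre n x)) {0..1}"
proof -
  have eq: "exp (circlepath 0 r t) * (1 - complex_of_real x / circlepath 0 r t) ^ n =
    (\<Sum>k\<le>n. (of_nat (n choose k) * (- complex_of_real x) ^ k) * (exp (circlepath 0 r t) / (circlepath 0 r t) ^ k))" for t
  proof -
    have "(1 - complex_of_real x / circlepath 0 r t) ^ n = ((- complex_of_real x / circlepath 0 r t) + 1) ^ n"
      by simp
    also have "\<dots> = (\<Sum>k\<le>n. of_nat (n choose k) * (- complex_of_real x / circlepath 0 r t) ^ k * 1 ^ (n - k))"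
      by (rule binomial_ring)
    finally have "(1 - complex_of_real x / circlepath 0 r t) ^ n = (\<Sum>k\<le>n. of_nat (n choose k) * ((- complex_of_real x) ^ k / (circlepath 0 r t) ^ k))"
      by (simp only: power_divide power_one mult_1_right)
    then show ?thesis
      by (simp add: sum_distrib_left mult_ac times_divide_eq_right)
  qed
  have "((\<lambda>t. \<Sum>k\<le>n. (of_nat (n choose k) * (- complex_of_real x) ^ k) * (exp (circlepath 0 r t) / (circlepath 0 r t) ^ k))
     has_integral (\<Sum>k\<le>n. (of_nat (n choose k) * (- complex_of_real x) ^ k) * (1 / fact k))) {0..1}"
    by (intro has_integral_sum finite_atMost ballI has_integral_mult_right exp_coeff_int r)
  moreover have "(\<Sum>k\<le>n. (of_nat (n choose k) * (- complex_of_real x) ^ k) * (1 / fact k)) = complex_of_real (laguerre n x)"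
    unfolding laguerre_alt by (simp add: of_real_sum)
  ultimately show ?thesis unfolding eq by simp
qed

lemma pt_bound:
  fixes e :: complex
  assumes e: "norm e = 1" and r: "r > 0" and rn: "r ^ 2 = real n * x" and x: "x \<ge> 0"
  shows "norm (exp (of_real r * e)) * norm (1 - of_real x / (of_real r * e)) ^ n \<le> exp (x / 2)"
proof -
  define c where "c = Re e"
  define s where "s = Im e"
  have cs: "c ^ 2 + s ^ 2 = 1"
    using e unfolding c_def s_def by (metis cmod_power2 power_one)
  have ne: "e \<noteq> 0" using e by auto
  have n1: "norm (exp (of_real r * e)) = exp (r * c)"
    by (simp add: c_def)
  define w where "w = 1 - of_real x / (of_real r * e)"
  have "w = (of_real r * e - of_real x) / (of_real r * e)"
    unfolding w_def using ne r by (simp add: field_simps)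
  then have nw: "norm w = norm (of_real r * e - of_real x) / r"
    using e r by (simp add: norm_divide norm_mult)
  have "norm (of_real r * e - of_real x) ^ 2 = (r * c - x) ^ 2 + (r * s) ^ 2"
    by (simp add: cmod_power2 c_def s_def)
  also have "\<dots> = r ^ 2 - 2 * r * c * x + x ^ 2"
  proof -
    have "(r * c - x) ^ 2 + (r * s) ^ 2 = r ^ 2 * (c ^ 2 + s ^ 2) - 2 * r * c * x + x ^ 2"
      by (simp add: power2_eq_square algebra_simps)
    then show ?thesis using cs by simp
  qed
  finally have "norm w ^ 2 = (r ^ 2 - 2 * r * c * x + x ^ 2) / r ^ 2"
    by (simp add: nw power_divide)
  also have "\<dots> = 1 + (x ^ 2 - 2 * r * c * x) / r ^ 2"
    using r by (simp add: field_simps)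
  finally have nw2: "norm w ^ 2 = 1 + (x ^ 2 - 2 * r * c * x) / r ^ 2" .
  define u where "u = (x ^ 2 - 2 * r * c * x) / r ^ 2"
  have nu: "real n * u = x - 2 * r * c"
  proof -
    have "real n * u = (x * (real n * x) - 2 * r * c * (real n * x)) / r ^ 2"
      unfolding u_def by (simp add: field_simps power2_eq_square)
    also have "\<dots> = (x * r ^ 2 - 2 * r * c * r ^ 2) / r ^ 2" by (simp add: rn)
    also have "\<dots> = x - 2 * r * c" using r by (simp add: field_simps)
    finally show ?thesis .
  qed
  have "(norm w ^ n) ^ 2 = (1 + u) ^ n"
  proof -
    have "(norm w ^ n) ^ 2 = (norm w ^ 2) ^ n"
      by (simp only: power_mult[symmetric] mult.commute)
    then show ?thesis by (simp only: nw2 u_def)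
  qed
  also have "\<dots> \<le> exp u ^ n"
  proof (rule power_mono)
    have "0 \<le> (norm w) ^ 2" by simp
    then show "0 \<le> 1 + u" using nw2 u_def by simp
  qed (rule exp_ge_add_one_self)
  also have "\<dots> = exp (x / 2 - r * c) ^ 2"
    by (simp add: exp_of_nat_mult[symmetric] nu flip: exp_of_nat_mult)
  finally have "norm w ^ n \<le> exp (x / 2 - r * c)"
    by (rule power2_le_imp_le) simp
  then have "exp (r * c) * norm w ^ n \<le> exp (r * c) * exp (x / 2 - r * c)"
    by (rule mult_left_mono) simp
  also have "\<dots> = exp (x / 2)" by (simp flip: exp_add)
  finally show ?thesis unfolding n1 w_def .
qed

lemma lag_bound:
  assumes x: "x \<ge> 0"
  shows "\<bar>laguerre n x\<bar> \<le> exp (x / 2)"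
proof (cases "n = 0 \<or> x = 0")
  case True
  have "laguerre n x = 1"
  proof (cases "n = 0")
    case True then show ?thesis by (simp add: laguerre_def)
  next
    case False
    with \<open>n = 0 \<or> x = 0\<close> have "x = 0" by simp
    have "laguerre n x = (\<Sum>k\<le>n. if k = 0 then 1 else 0)"
      unfolding laguerre_alt by (rule sum.cong) (auto simp: \<open>x = 0\<close>)
    also have "\<dots> = 1" by (simp only: sum.delta finite_atMost) simp
    finally show ?thesis .
  qed
  then show ?thesis using x by simp
next
  case False
  then have np: "n > 0" and xp: "x > 0" using x by auto
  define r where "r = sqrt (real n * x)"
  have r: "r > 0" using np xp unfolding r_def by simp
  have rn: "r ^ 2 = real n * x" unfolding r_def using np xp by simp
  have "norm (complex_of_real (laguerre n x)) \<le> exp (x / 2) * Henstock_Kurzweil_Integration.content (cbox (0::real) 1)"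
  proof (rule has_integral_bound)
    show "((\<lambda>t. exp (circlepath 0 r t) * (1 - complex_of_real x / circlepath 0 r t) ^ n)
           has_integral complex_of_real (laguerre n x)) (cbox 0 1)"
      using lag_repr[OF r, of x n] by simp
    fix t :: real
    assume "t \<in> cbox 0 1"
    define e where "e = exp (2 * of_real pi * \<i> * of_real t)"
    have e: "norm e = 1" unfolding e_def by simp
    have "circlepath 0 r t = of_real r * e" unfolding e_def by (simp add: circlepath)
    then have "norm (exp (circlepath 0 r t) * (1 - complex_of_real x / circlepath 0 r t) ^ n) =
       norm (exp (of_real r * e)) * norm (1 - of_real x / (of_real r * e)) ^ n"
      by (simp only: norm_mult norm_power)
    also have "\<dots> \<le> exp (x / 2)" by (rule pt_bound[OF e r rn x])
    finally show "norm (exp (circlepath 0 r t) * (1 - complex_of_real x / circlepath 0 r t) ^ n) \<le> exp (x / 2)" .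
  qed simp
  then show ?thesis by simp
qed




definition phi :: "nat \<Rightarrow> real \<Rightarrow> real" where
  "phi n y = exp (- y / 2) * laguerre n y"

lemma phi_bound: "y \<ge> 0 \<Longrightarrow> \<bar>phi n y\<bar> \<le> 1"
proof -
  assume y: "y \<ge> 0"
  have "\<bar>phi n y\<bar> = exp (- y / 2) * \<bar>laguerre n y\<bar>" by (simp add: phi_def abs_mult)
  also have "\<dots> \<le> exp (- y / 2) * exp (y / 2)"
    by (rule mult_left_mono[OF lag_bound[OF y]]) simp
  also have "\<dots> = 1" by (simp flip: exp_add)
  finally show ?thesis .
qed

lemma phi_conv:
  fixes x :: real
  assumes "0 \<le> x"
  shows "((\<lambda>t. phi m (x - t) * phi n t) has_integral (phi (m + n) x - phi (Suc (m + n)) x)) {0..x}"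
proof -
  have "((\<lambda>t. exp (- x / 2) * (laguerre m (x - t) * laguerre n t)) has_integral
      exp (- x / 2) * (laguerre (m + n) x - laguerre (Suc (m + n)) x)) {0..x}"
    by (rule has_integral_mult_right[OF lag_conv[OF assms]])
  moreover have "exp (- x / 2) * (laguerre m (x - t) * laguerre n t) = phi m (x - t) * phi n t" for t
  proof -
    have "exp (- (x - t) / 2) * exp (- t / 2) = exp (- x / 2)"
      by (simp flip: exp_add add: field_simps)
    then show ?thesis unfolding phi_def by (metis mult.assoc mult.left_commute)
  qed
  moreover have "exp (- x / 2) * (laguerre (m + n) x - laguerre (Suc (m + n)) x) = phi (m + n) x - phi (Suc (m + n)) x"
    by (simp add: phi_def right_diff_distrib)
  ultimately show ?thesis by simp
qed

lemma c_eq: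
  fixes a b :: "nat \<Rightarrow> real"
  defines "d \<equiv> \<lambda>k. \<Sum>n\<le>k. a (k - n) * b n"
  shows "(\<Sum>n. RL a k n * b n) = d k - (if k = 0 then 0 else d (k - 1))"
proof -
  have RL1: "RL a k n = a (k - n) - (if n < k then a (k - n - 1) else 0)" if "n \<le> k" for n
    using that unfolding RL_def coeff_ext_def
    by (auto simp: nat_diff_distrib' of_nat_diff)
  have "(\<Sum>n. RL a k n * b n) = (\<Sum>n\<le>k. RL a k n * b n)"
    by (rule suminf_finite) (auto simp: RL_def coeff_ext_def)
  also have "\<dots> = (\<Sum>n\<le>k. a (k - n) * b n - (if n < k then a (k - n - 1) * b n else 0))"
    by (rule sum.cong) (auto simp: RL1 algebra_simps)
  also have "\<dots> = d k - (\<Sum>n\<le>k. (if n < k then a (k - n - 1) * b n else 0))"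
    by (simp add: sum_subtractf d_def)
  also have "(\<Sum>n\<le>k. (if n < k then a (k - n - 1) * b n else 0)) = (if k = 0 then 0 else d (k - 1))"
  proof (cases k)
    case 0 then show ?thesis by simp
  next
    case (Suc m)
    have "(\<Sum>n\<le>Suc m. (if n < Suc m then a (Suc m - n - 1) * b n else 0)) = (\<Sum>n\<le>m. a (m - n) * b n)"
      by (simp add: Suc_diff_le)
    then show ?thesis using Suc by (simp add: d_def)
  qed
  finally show ?thesis .
qed



theorem theorem5p2:
  fixes a b c :: "nat \<Rightarrow> real" and f g h :: "real \<Rightarrow> real"
  assumes a_sum: "summable (\<lambda>m. \<bar>a m\<bar>)"
    and b_sum: "summable (\<lambda>n. \<bar>b n\<bar>)"
    and f_def: "\<And>x. x \<ge> 0 \<Longrightarrow> f x = exp (- x / 2) * (\<Sum>m. a m * laguerre m x)"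
    and g_def: "\<And>x. x \<ge> 0 \<Longrightarrow> g x = exp (- x / 2) * (\<Sum>n. b n * laguerre n x)"
    and h_def: "\<And>x. x \<ge> 0 \<Longrightarrow> h x = integral {0..x} (\<lambda>t. f (x - t) * g t)"
    and c_def: "\<And>k. c k = (\<Sum>n. RL a k n * b n)"
  shows "\<forall>x \<ge> 0. summable (\<lambda>k. c k * laguerre k x) \<and>
           h x = exp (- x / 2) * (\<Sum>k. c k * laguerre k x)"
proof (intro allI impI)
  fix x :: real
  assume x: "x \<ge> 0"
  define d where "d k = (\<Sum>n\<le>k. a (k - n) * b n)" for k
  define Ph where "Ph k = phi k x" for k
  have Phb: "\<bar>Ph k\<bar> \<le> 1" for k unfolding Ph_def by (rule phi_bound[OF x])
  define D where "D k = (\<Sum>i\<le>k. \<bar>b i\<bar> * \<bar>a (k - i)\<bar>)" for k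
  have Dsum: "summable D"
    unfolding D_def using summable_Cauchy_product[of "\<lambda>i. \<bar>b i\<bar>" "\<lambda>i. \<bar>a i\<bar>"] a_sum b_sum by simp
  have D0: "0 \<le> D k" for k unfolding D_def by (intro sum_nonneg) simp
  have dD: "\<bar>d k\<bar> \<le> D k" for k
  proof -
    have "\<bar>d k\<bar> \<le> (\<Sum>n\<le>k. \<bar>a (k - n) * b n\<bar>)" unfolding d_def by (rule sum_abs)
    also have "\<dots> = D k" unfolding D_def by (simp add: abs_mult mult.commute)
    finally show ?thesis .
  qed
  have sum1: "summable (\<lambda>k. d k * Ph k)"
  proof (rule summable_comparison_test'[OF Dsum])
    fix k :: nat
    have "norm (d k * Ph k) = \<bar>d k\<bar> * \<bar>Ph k\<bar>" by (simp add: abs_mult)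
    also have "\<dots> \<le> D k * 1" using dD Phb D0 by (intro mult_mono) auto
    finally show "norm (d k * Ph k) \<le> D k" by simp
  qed
  have sum2: "summable (\<lambda>k. d k * Ph (Suc k))"
  proof (rule summable_comparison_test'[OF Dsum])
    fix k :: nat
    have "norm (d k * Ph (Suc k)) = \<bar>d k\<bar> * \<bar>Ph (Suc k)\<bar>" by (simp add: abs_mult)
    also have "\<dots> \<le> D k * 1" using dD Phb D0 by (intro mult_mono) auto
    finally show "norm (d k * Ph (Suc k)) \<le> D k" by simp
  qed
  define s1 where "s1 = (\<Sum>k. d k * Ph k)"
  define s2 where "s2 = (\<Sum>k. d k * Ph (Suc k))"
  have S1: "(\<lambda>k. d k * Ph k) sums s1" using sum1 unfolding s1_def by (rule summable_sums)
  have S2: "(\<lambda>k. d k * Ph (Suc k)) sums s2" using sum2 unfolding s2_def by (rule summable_sums)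
  have cdef: "c k = d k - (if k = 0 then 0 else d (k - 1))" for k
    unfolding c_def d_def by (rule c_eq)
  have S2': "(\<lambda>k. (if k = 0 then 0 else d (k - 1)) * Ph k) sums s2"
  proof -
    have "(\<lambda>k. (if Suc k = 0 then 0 else d (Suc k - 1)) * Ph (Suc k)) sums s2" using S2 by simp
    then have "(\<lambda>k. (if k = 0 then 0 else d (k - 1)) * Ph k) sums (s2 + (if 0 = (0::nat) then 0 else d (0 - 1)) * Ph 0)"
      by (rule sums_Suc_iff[THEN iffD1])
    then show ?thesis by simp
  qed
  have Sc: "(\<lambda>k. c k * Ph k) sums (s1 - s2)"
  proof -
    have "(\<lambda>k. d k * Ph k - (if k = 0 then 0 else d (k - 1)) * Ph k) sums (s1 - s2)"
      by (rule sums_diff[OF S1 S2'])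
    then show ?thesis by (simp add: cdef left_diff_distrib)
  qed
  have cL: "c k * laguerre k x = exp (x / 2) * (c k * Ph k)" for k
  proof -
    have "exp (x / 2) * exp (- x / 2) = 1" by (simp flip: exp_add)
    then show ?thesis unfolding Ph_def phi_def by (metis mult.assoc mult.left_commute mult_1)
  qed
  have ScL: "(\<lambda>k. c k * laguerre k x) sums (exp (x / 2) * (s1 - s2))"
    unfolding cL by (rule sums_mult[OF Sc])
  have rhs: "exp (- x / 2) * (\<Sum>k. c k * laguerre k x) = s1 - s2"
  proof -
    have "exp (- x / 2) * exp (x / 2) = 1" by (simp flip: exp_add)
    then show ?thesis using sums_unique[OF ScL] by (metis mult.assoc mult_1)
  qed
  define W where "W k t = (\<Sum>i\<le>k. (b i * phi i t) * (a (k - i) * phi (k - i) (x - t)))" for k t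
  have Wint: "(W k has_integral d k * (Ph k - Ph (Suc k))) {0..x}" for k
  proof -
    have "((\<lambda>t. \<Sum>i\<le>k. (b i * a (k - i)) * (phi (k - i) (x - t) * phi i t)) has_integral
        (\<Sum>i\<le>k. (b i * a (k - i)) * (phi (k - i + i) x - phi (Suc (k - i + i)) x))) {0..x}"
      by (intro has_integral_sum finite_atMost ballI has_integral_mult_right phi_conv x)
    moreover have "(\<Sum>i\<le>k. (b i * a (k - i)) * (phi (k - i + i) x - phi (Suc (k - i + i)) x)) = d k * (Ph k - Ph (Suc k))"
      unfolding d_def Ph_def sum_distrib_right by (intro sum.cong refl) (simp add: mult_ac)
    moreover have "(\<lambda>t. \<Sum>i\<le>k. (b i * a (k - i)) * (phi (k - i) (x - t) * phi i t)) = W k"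
      unfolding W_def by (intro ext sum.cong refl) (simp add: mult_ac)
    ultimately show ?thesis by simp
  qed
  have Wb: "\<bar>W k t\<bar> \<le> D k" if t: "t \<in> {0..x}" for k t
  proof -
    have t0: "t \<ge> 0" and xt: "x - t \<ge> 0" using t by auto
    have "\<bar>W k t\<bar> \<le> (\<Sum>i\<le>k. \<bar>(b i * phi i t) * (a (k - i) * phi (k - i) (x - t))\<bar>)"
      unfolding W_def by (rule sum_abs)
    also have "\<dots> \<le> (\<Sum>i\<le>k. \<bar>b i\<bar> * \<bar>a (k - i)\<bar>)"
    proof (rule sum_mono)
      fix i
      have "\<bar>(b i * phi i t) * (a (k - i) * phi (k - i) (x - t))\<bar> =
            (\<bar>b i\<bar> * \<bar>a (k - i)\<bar>) * (\<bar>phi i t\<bar> * \<bar>phi (k - i) (x - t)\<bar>)"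
        by (simp add: abs_mult mult_ac)
      also have "\<dots> \<le> (\<bar>b i\<bar> * \<bar>a (k - i)\<bar>) * (1 * 1)"
        by (intro mult_left_mono mult_mono phi_bound t0 xt) auto
      finally show "\<bar>(b i * phi i t) * (a (k - i) * phi (k - i) (x - t))\<bar> \<le> \<bar>b i\<bar> * \<bar>a (k - i)\<bar>" by simp
    qed
    finally show ?thesis unfolding D_def .
  qed
  have Wconv: "(\<lambda>k. W k t) sums (f (x - t) * g t)" if t: "t \<in> {0..x}" for t
  proof -
    have t0: "t \<ge> 0" and xt: "x - t \<ge> 0" using t by auto
    have ser: "(\<lambda>n. u n * phi n y) sums (exp (- y / 2) * (\<Sum>n. u n * laguerre n y))"
      and nser: "summable (\<lambda>n. norm (u n * phi n y))"
      if y: "y \<ge> 0" and us: "summable (\<lambda>n. \<bar>u n\<bar>)" for u :: "nat \<Rightarrow> real" and y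
    proof -
      have "summable (\<lambda>n. u n * laguerre n y)"
      proof (rule summable_comparison_test'[OF summable_mult2[OF us, of "exp (y / 2)"]])
        fix n :: nat
        show "norm (u n * laguerre n y) \<le> \<bar>u n\<bar> * exp (y / 2)"
          using lag_bound[OF y, of n] by (simp add: abs_mult mult_left_mono)
      qed
      from sums_mult[OF summable_sums[OF this], of "exp (- y / 2)"]
      show "(\<lambda>n. u n * phi n y) sums (exp (- y / 2) * (\<Sum>n. u n * laguerre n y))"
        by (simp add: phi_def mult_ac)
      show "summable (\<lambda>n. norm (u n * phi n y))"
      proof (rule summable_comparison_test'[OF us])
        fix n :: nat
        have "norm (norm (u n * phi n y)) = \<bar>u n\<bar> * \<bar>phi n y\<bar>" by (simp add: abs_mult)
        also have "\<dots> \<le> \<bar>u n\<bar> * 1" by (intro mult_left_mono phi_bound y) simp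
        finally show "norm (norm (u n * phi n y)) \<le> \<bar>u n\<bar>" by simp
      qed
    qed
    have gs: "(\<lambda>n. b n * phi n t) sums g t" using ser[OF t0 b_sum] g_def[OF t0] by simp
    have fs: "(\<lambda>n. a n * phi n (x - t)) sums f (x - t)" using ser[OF xt a_sum] f_def[OF xt] by simp
    have "(\<lambda>k. \<Sum>i\<le>k. (b i * phi i t) * (a (k - i) * phi (k - i) (x - t))) sums
        ((\<Sum>n. b n * phi n t) * (\<Sum>n. a n * phi n (x - t)))"
      by (rule Cauchy_product_sums[OF nser[OF t0 b_sum] nser[OF xt a_sum]])
    then show ?thesis unfolding W_def sums_unique[OF gs, symmetric] sums_unique[OF fs, symmetric]
      by (simp add: mult.commute)
  qed
  define F where "F N t = (\<Sum>k<N. W k t)" for N t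
  have Fint: "(F N has_integral (\<Sum>k<N. d k * (Ph k - Ph (Suc k)))) {0..x}" for N
    unfolding F_def by (intro has_integral_sum finite_lessThan ballI Wint)
  have Fb: "norm (F N t) \<le> suminf D" if t: "t \<in> {0..x}" for N t
  proof -
    have "norm (F N t) \<le> (\<Sum>k<N. \<bar>W k t\<bar>)" unfolding F_def by (simp add: sum_abs)
    also have "\<dots> \<le> (\<Sum>k<N. D k)" by (intro sum_mono Wb t)
    also have "\<dots> \<le> suminf D" by (rule sum_le_suminf[OF Dsum]) (auto simp: D0)
    finally show ?thesis .
  qed
  have lim: "(\<lambda>N. integral {0..x} (F N)) \<longlonglongrightarrow> integral {0..x} (\<lambda>t. f (x - t) * g t)"
  proof (rule dominated_convergence(2))
    show "F N integrable_on {0..x}" for N using Fint by blast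
    show "(\<lambda>t. suminf D) integrable_on {0..x}" by (rule integrable_const_ivl)
    show "norm (F N t) \<le> suminf D" if "t \<in> {0..x}" for N t using Fb that .
    show "(\<lambda>N. F N t) \<longlonglongrightarrow> f (x - t) * g t" if "t \<in> {0..x}" for t
      using Wconv[OF that] unfolding F_def sums_def .
  qed
  have FI: "integral {0..x} (F N) = (\<Sum>k<N. d k * (Ph k - Ph (Suc k)))" for N
    by (rule integral_unique[OF Fint])
  have "(\<lambda>k. d k * (Ph k - Ph (Suc k))) sums (h x)"
    unfolding sums_def h_def[OF x] using lim unfolding FI .
  moreover have "(\<lambda>k. d k * (Ph k - Ph (Suc k))) sums (s1 - s2)"
    using sums_diff[OF S1 S2] by (simp add: right_diff_distrib)
  ultimately have "h x = s1 - s2" by (rule sums_unique2)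
  then show "summable (\<lambda>k. c k * laguerre k x) \<and> h x = exp (- x / 2) * (\<Sum>k. c k * laguerre k x)"
    using ScL rhs by (auto simp: sums_iff)
qed


end
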